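(* Let $\mu,\nu$ be Lipschitz continuous on $\mathbb D$, $R>0$, $L\ge1$ an integer, $z_i,w_j\in\mathbb D$. Then $$|d^R_{\mu,\nu}(z_i,w_j)-\hat{\hat d}^R_{\mu,\nu}(z_i,w_j)|\le C_1\varphi_E(\{p_k\})+C_2L^{-1},$$ with $C_1,C_2$ depending only on $\mu,\nu,R$.
   Context: Notation as follows: $\mathbb D$ open unit disk, $d\mathrm{vol}_H=(1-|z|^2)^{-2}dx^1\wedge dx^2$, $M_{\mathbb D}$ the maps $e^{i\theta}(z-a)/(1-\bar az)$, $\Omega_{z_0,R}$ the hyperbolic disk of radius $R$ about $z_0$ ($\Omega_{0,R}=\{|z|\le\tanh R\}$), $d^R_{\mu,\nu}(z_0,w_0)=\inf_{m\in M_{\mathbb D},m(z_0)=w_0}\int_{\Omega_{z_0,R}}|\mu(z)-\nu(m(z))|d\mathrm{vol}_H(z)$. Quadrature centers $p_k\in\Omega_{0,R}$, weights $\alpha_k$ = hyperbolic area of $\Omega_{0,R}\cap(\text{Euclidean Voronoi cell of }p_k)$, $\varphi_E(\{p_k\})$ the Euclidean fill distance of $\{p_k\}$ in $\Omega_{0,R}$. Fixed $\tilde m_i,\tilde m_j\in M_{\mathbb D}$ with $\tilde m_i(0)=z_i$, $\tilde m_j(0)=w_j$; $m_{z_i,w_j,2\pi\ell/L}=\tilde m_j\circ\mathfrak R_\ell\circ\tilde m_i^{-1}$ with $\mathfrak R_\ell(z)=e^{2\pi i\ell/L}z$, and $\hat{\hat d}^R_{\mu,\nu}(z_i,w_j)=\min_{\ell=1,\dots,L}\sum_k\alpha_k|\mu(\tilde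 m_i(p_k))-\nu(m_{z_i,w_j,2\pi\ell/L}(\tilde m_i(p_k)))|$. *)

theory Defs
  imports "HOL-Analysis.Analysis"
begin

definition hyp_density :: "complex \<Rightarrow> real" where
  "hyp_density z = 1 / (1 - (cmod z)\<^sup>2)\<^sup>2"

definition mobius_D :: "(complex \<Rightarrow> complex) set" where
  "mobius_D = {f. \<exists>a \<theta>. cmod a < 1 \<and>
      f = (\<lambda>z. exp (\<i> * complex_of_real \<theta>) * (z - a) / (1 - cnj a * z))}"

text \<open>Closed hyperbolic disk of radius R about z0 (so that hyp_disk 0 R = {|z| <= tanh R}).\<close>
definition hyp_disk :: "complex \<Rightarrow> real \<Rightarrow> complex set" where
  "hyp_disk z0 R = {z \<in> ball 0 1. cmod ((z - z0) / (1 - cnj z0 * z)) \<le> tanh R}"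

definition dR :: "(complex \<Rightarrow> real) \<Rightarrow> (complex \<Rightarrow> real) \<Rightarrow> real \<Rightarrow> complex \<Rightarrow> complex \<Rightarrow> real" where
  "dR \<mu> \<nu> R z0 w0 = (INF m \<in> {m \<in> mobius_D. m z0 = w0}.
      LINT z:hyp_disk z0 R|lborel. hyp_density z * \<bar>\<mu> z - \<nu> (m z)\<bar>)"

definition voronoi :: "complex set \<Rightarrow> complex \<Rightarrow> complex set" where
  "voronoi P p = {z. \<forall>q\<in>P. cmod (z - p) \<le> cmod (z - q)}"

definition quad_weight :: "real \<Rightarrow> complex set \<Rightarrow> complex \<Rightarrow> real" where
  "quad_weight R P p = (LINT z:(hyp_disk 0 R \<inter> voronoi P p)|lborel. hyp_density z)"

definition fill_dist :: "real \<Rightarrow> complex set \<Rightarrow> real" where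
  "fill_dist R P = (SUP z \<in> hyp_disk 0 R. INF p \<in> P. cmod (z - p))"

definition rot :: "nat \<Rightarrow> nat \<Rightarrow> complex \<Rightarrow> complex" where
  "rot L l z = exp (2 * pi * \<i> * of_nat l / of_nat L) * z"

text \<open>The discretized distance; mi, mj are the fixed automorphisms with mi 0 = z_i, mj 0 = w_j.\<close>
definition dhh :: "(complex \<Rightarrow> real) \<Rightarrow> (complex \<Rightarrow> real) \<Rightarrow> real \<Rightarrow> complex set \<Rightarrow> nat
    \<Rightarrow> (complex \<Rightarrow> complex) \<Rightarrow> (complex \<Rightarrow> complex) \<Rightarrow> real" where
  "dhh \<mu> \<nu> R P L mi mj = Min ((\<lambda>l. \<Sum>p\<in>P. quad_weight R P p *
      \<bar>\<mu> (mi p) - \<nu> ((mj \<circ> rot L l \<circ> inv_into (ball 0 1) mi) (mi p))\<bar>) ` {1..L})"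

end

theory Submission
  imports Defs
begin

definition mob :: "complex \<Rightarrow> real \<Rightarrow> complex \<Rightarrow> complex" where
  "mob a t z = exp (\<i> * complex_of_real t) * (z - a) / (1 - cnj a * z)"

lemma mobius_D_mob: "mobius_D = {f. \<exists>a t. cmod a < 1 \<and> f = mob a t}"
  unfolding mobius_D_def mob_def by auto

lemma norm_exp_it [simp]: "cmod (exp (\<i> * complex_of_real t)) = 1"
  by (simp add: norm_exp_i_times)

lemma cnj_mult_lt1: "cmod a < 1 \<Longrightarrow> cmod z \<le> 1 \<Longrightarrow> cmod (cnj a * z) < 1"
proof -
  assume "cmod a < 1" "cmod z \<le> 1"
  then have "cmod a * cmod z \<le> cmod a * 1" by (intro mult_left_mono) auto
  then show ?thesis using \<open>cmod a < 1\<close> by (simp add: norm_mult)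
qed

lemma mob_den: "cmod a < 1 \<Longrightarrow> cmod z \<le> 1 \<Longrightarrow> 1 - cnj a * z \<noteq> 0"
  using cnj_mult_lt1[of a z] by auto

lemma cmod_sq: "complex_of_real ((cmod z)\<^sup>2) = z * cnj z"
  by (rule complex_norm_square)

lemma key_id: "(cmod (1 - cnj a * z))\<^sup>2 = (cmod (z - a))\<^sup>2 + (1 - (cmod a)\<^sup>2) * (1 - (cmod z)\<^sup>2)"
proof -
  have e: "(1 - cnj a * z) * (1 - a * cnj z) = (z - a) * (cnj z - cnj a) + (1 - a * cnj a) * (1 - z * cnj z)"
    by (simp add: algebra_simps)
  have "complex_of_real ((cmod (1 - cnj a * z))\<^sup>2) = complex_of_real ((cmod (z - a))\<^sup>2 + (1 - (cmod a)\<^sup>2) * (1 - (cmod z)\<^sup>2))"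
    unfolding of_real_add of_real_mult of_real_diff of_real_1 cmod_sq
    using e by simp
  then show ?thesis by (simp only: of_real_eq_iff)
qed

lemma cnj_exp_it: "cnj (exp (\<i> * complex_of_real t)) = inverse (exp (\<i> * complex_of_real t))"
proof -
  have "cnj (\<i> * complex_of_real t) = - (\<i> * complex_of_real t)" by simp
  then show ?thesis by (simp only: exp_cnj exp_minus)
qed

lemma exp_it_ne0 [simp]: "exp (\<i> * complex_of_real t) \<noteq> 0" by simp

lemma cmod_mob: "cmod a < 1 \<Longrightarrow> cmod z \<le> 1 \<Longrightarrow> cmod (mob a t z) = cmod (z - a) / cmod (1 - cnj a * z)"
  by (simp add: mob_def norm_mult norm_divide)

lemma real_aux: assumes "(D::real) > 0" "D\<^sup>2 = N\<^sup>2 + X" shows "1 - (N / D)\<^sup>2 = X / D\<^sup>2"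
proof -
  have "1 - (N / D)\<^sup>2 = (D\<^sup>2 - N\<^sup>2) / D\<^sup>2" using assms(1) by (simp add: power_divide diff_divide_distrib)
  then show ?thesis using assms(2) by simp
qed

lemma mob_norm: assumes "cmod a < 1" "cmod z \<le> 1"
  shows "1 - (cmod (mob a t z))\<^sup>2 = (1 - (cmod a)\<^sup>2) * (1 - (cmod z)\<^sup>2) / (cmod (1 - cnj a * z))\<^sup>2"
proof -
  have d: "cmod (1 - cnj a * z) > 0" using mob_den[OF assms] by simp
  have k: "(cmod (1 - cnj a * z))\<^sup>2 = (cmod (z - a))\<^sup>2 + (1 - (cmod a)\<^sup>2) * (1 - (cmod z)\<^sup>2)"
    by (rule key_id)
  show ?thesis unfolding cmod_mob[OF assms] using real_aux[OF d k] .
qed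

lemma mob_ball: assumes "cmod a < 1" "cmod z < 1" shows "cmod (mob a t z) < 1"
proof -
  have d: "cmod (1 - cnj a * z) > 0" using mob_den[OF assms(1)] assms(2) by simp
  have "(1 - (cmod a)\<^sup>2) > 0" "(1 - (cmod z)\<^sup>2) > 0" using assms
    by (simp_all add: abs_square_less_1)
  then have "1 - (cmod (mob a t z))\<^sup>2 > 0" using d mob_norm[OF assms(1), of z t] assms(2) by simp
  then show ?thesis by (simp add: abs_square_less_1)
qed

lemma cx_aux: "(B::complex) \<noteq> 0 \<Longrightarrow> A \<noteq> 0 \<Longrightarrow> e \<noteq> 0 \<Longrightarrow> inverse e * (e * z * A / B) / (A / B) = z"
  by (simp add: field_simps)

lemma mob_inv: assumes "cmod a < 1" "cmod z < 1"
  shows "mob (- (exp (\<i> * complex_of_real t) * a)) (- t) (mob a t z) = z"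
proof -
  define e where "e = exp (\<i> * complex_of_real t)"
  have ce: "cnj e = inverse e" unfolding e_def by (rule cnj_exp_it)
  have e0: "e \<noteq> 0" unfolding e_def by simp
  have em: "exp (\<i> * complex_of_real (- t)) = inverse e" unfolding e_def by (simp add: exp_minus)
  have d: "1 - cnj a * z \<noteq> 0" using mob_den[OF assms(1)] assms(2) by simp
  have aa: "1 - a * cnj a \<noteq> 0"
  proof
    assume "1 - a * cnj a = 0"
    then have "a * cnj a = 1" by simp
    then have "complex_of_real ((cmod a)\<^sup>2) = 1" by (simp only: cmod_sq)
    then have "(cmod a)\<^sup>2 = 1" by (simp only: of_real_eq_1_iff)
    then show False using assms(1) norm_ge_zero[of a] by (simp add: power2_eq_1_iff)
  qed
  define w where "w = e * (z - a) / (1 - cnj a * z)"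
  have w1: "w + e * a = e * z * (1 - a * cnj a) / (1 - cnj a * z)"
    unfolding w_def using d by (simp add: field_simps)
  have w2: "1 - cnj (- (e * a)) * w = (1 - a * cnj a) / (1 - cnj a * z)"
    unfolding w_def using d e0 by (simp add: field_simps ce)
  have "mob (- (e * a)) (- t) w = inverse e * (w + e * a) / (1 - cnj (- (e * a)) * w)"
    unfolding mob_def em by simp
  also have "\<dots> = z" unfolding w1 w2 using d aa e0 by (rule cx_aux)
  finally show ?thesis unfolding w_def e_def mob_def .
qed

lemma comp_alg:
  fixes e1 e2 z a1 b1 a2 b2 :: complex
  assumes e2: "e2 \<noteq> 0" and B: "1 - b2 * z \<noteq> 0" and Dn: "(1 + b1 * e2 * a2) - (b2 + b1 * e2) * z \<noteq> 0"
    and c: "1 + b1 * e2 * a2 \<noteq> 0" and C: "1 + a1 * inverse e2 * b2 \<noteq> 0"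
  shows "e1 * (e2 * (z - a2) / (1 - b2 * z) - a1) / (1 - b1 * (e2 * (z - a2) / (1 - b2 * z)))
    = (e1 * e2 * (1 + a1 * inverse e2 * b2) / (1 + b1 * e2 * a2)) * (z - (e2 * a2 + a1) / (e2 * (1 + a1 * inverse e2 * b2)))
       / (1 - ((inverse e2 * b2 + b1) / (inverse e2 * (1 + b1 * e2 * a2))) * z)"
proof -
  define N where "N = (e2 + a1 * b2) * z - (e2 * a2 + a1)"
  define D where "D = (1 + b1 * e2 * a2) - (b2 + b1 * e2) * z"
  define c' where "c' = 1 + b1 * e2 * a2"
  define C' where "C' = 1 + a1 * inverse e2 * b2"
  have n: "e2 * (z - a2) / (1 - b2 * z) - a1 = N / (1 - b2 * z)"
    using B unfolding N_def by (simp add: field_simps)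
  have d: "1 - b1 * (e2 * (z - a2) / (1 - b2 * z)) = D / (1 - b2 * z)"
    using B unfolding D_def by (simp add: field_simps)
  have D0: "D \<noteq> 0" using Dn unfolding D_def .
  have L: "e1 * (e2 * (z - a2) / (1 - b2 * z) - a1) / (1 - b1 * (e2 * (z - a2) / (1 - b2 * z))) = e1 * N / D"
    unfolding n d using B D0 by (simp add: field_simps)
  have eC: "e2 * C' = e2 + a1 * b2" unfolding C'_def using e2 by (simp add: field_simps)
  have eC0: "e2 * C' \<noteq> 0" using e2 C unfolding C'_def by simp
  have r1: "z - (e2 * a2 + a1) / (e2 * C') = N / (e2 * C')"
    using eC0 unfolding N_def eC by (simp add: field_simps)
  have r20: "inverse e2 * b2 + b1 = inverse e2 * (b2 + b1 * e2)" using e2 by (simp add: field_simps)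
  have r21: "(inverse e2 * b2 + b1) / (inverse e2 * c') = (b2 + b1 * e2) / c'"
    unfolding r20 using e2 by simp
  have r2: "1 - ((inverse e2 * b2 + b1) / (inverse e2 * c')) * z = D / c'"
    unfolding r21 using c unfolding D_def c'_def by (simp add: field_simps)
  have R: "(e1 * e2 * C' / c') * (N / (e2 * C')) / (D / c') = e1 * N / D"
    using eC0 c D0 unfolding c'_def[symmetric] by (simp add: field_simps)
  show ?thesis unfolding c'_def[symmetric] C'_def[symmetric] L r1 r2 R ..
qed

lemma mob_deriv: assumes "1 - cnj a * z \<noteq> 0"
  shows "(mob a t has_field_derivative (exp (\<i> * complex_of_real t) * (1 - cnj a * a) / (1 - cnj a * z)\<^sup>2)) (at z)"
proof -
  have m: "mob a t = (\<lambda>z. exp (\<i> * complex_of_real t) * (z - a) / (1 - cnj a * z))"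
    by (rule ext) (simp add: mob_def)
  show ?thesis unfolding m using assms
    by (auto intro!: derivative_eq_intros simp: field_simps power2_eq_square)
qed

lemma unit_exp: assumes "cmod u = 1" shows "\<exists>t. exp (\<i> * complex_of_real t) = u"
proof -
  have u0: "u \<noteq> 0" using assms by auto
  have "exp (\<i> * complex_of_real (Arg u)) = cis (Arg u)" by (simp add: cis_conv_exp)
  also have "\<dots> = sgn u" using u0 by (rule cis_Arg)
  also have "\<dots> = u" using assms by (simp add: sgn_div_norm)
  finally show ?thesis by blast
qed

lemma mob_comp: assumes a1: "cmod a1 < 1" and a2: "cmod a2 < 1"
  shows "\<exists>a t. cmod a < 1 \<and> (\<forall>z. cmod z < 1 \<longrightarrow> mob a1 t1 (mob a2 t2 z) = mob a t z)"
proof -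
  define e1 where "e1 = exp (\<i> * complex_of_real t1)"
  define e2 where "e2 = exp (\<i> * complex_of_real t2)"
  have e2n: "cmod e2 = 1" "e2 \<noteq> 0" unfolding e2_def by simp_all
  have ce2: "cnj e2 = inverse e2" unfolding e2_def by (rule cnj_exp_it)
  define c where "c = 1 + cnj a1 * e2 * a2"
  have cC: "cnj c = 1 + a1 * inverse e2 * cnj a2" unfolding c_def by (simp add: ce2)
  have lt: "cmod (cnj a1 * e2 * a2) < 1"
  proof -
    have "cmod (cnj a1 * e2 * a2) = cmod a1 * cmod a2" by (simp add: norm_mult e2n)
    also have "\<dots> \<le> cmod a1 * 1" using a1 a2 by (intro mult_left_mono) auto
    finally show ?thesis using a1 by simp
  qed
  have c0: "c \<noteq> 0"
  proof
    assume "c = 0" then have "cnj a1 * e2 * a2 = -1" unfolding c_def by (simp add: add_eq_0_iff)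
    then show False using lt by simp
  qed
  define a where "a = (e2 * a2 + a1) / (e2 * cnj c)"
  define u where "u = e1 * e2 * cnj c / c"
  have "cmod u = 1" unfolding u_def e1_def using c0 e2n by (simp add: norm_mult norm_divide)
  then obtain t where t: "exp (\<i> * complex_of_real t) = u" using unit_exp by blast
  have ka: "(cmod (1 - cnj (- a1) * (e2 * a2)))\<^sup>2 = (cmod (e2 * a2 - - a1))\<^sup>2 + (1 - (cmod (- a1))\<^sup>2) * (1 - (cmod (e2 * a2))\<^sup>2)"
    by (rule key_id)
  have kc: "1 - cnj (- a1) * (e2 * a2) = c" unfolding c_def by (simp add: algebra_simps)
  have pos: "(1 - (cmod a1)\<^sup>2) * (1 - (cmod a2)\<^sup>2) > 0" using a1 a2
    by (intro mult_pos_pos) (simp_all add: abs_square_less_1)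
  have "(cmod (e2 * a2 + a1))\<^sup>2 < (cmod c)\<^sup>2" using ka pos unfolding kc by (simp add: norm_mult e2n)
  then have lt2: "cmod (e2 * a2 + a1) < cmod c" by (simp add: power_less_imp_less_base)
  have "cmod a = cmod (e2 * a2 + a1) / cmod c" unfolding a_def by (simp add: norm_divide norm_mult e2n)
  then have alt: "cmod a < 1" using lt2 c0 by simp
  have ca: "cnj a = (inverse e2 * cnj a2 + cnj a1) / (inverse e2 * c)" unfolding a_def by (simp add: ce2)
  have "mob a1 t1 (mob a2 t2 z) = mob a t z" if z: "cmod z < 1" for z
  proof -
    have B: "1 - cnj a2 * z \<noteq> 0" using mob_den[OF a2] z by simp
    have w: "cmod (mob a2 t2 z) < 1" using mob_ball[OF a2 z] .
    have "1 - cnj a1 * mob a2 t2 z \<noteq> 0" using mob_den[OF a1] w by simp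
    then have B1: "1 - cnj a1 * (e2 * (z - a2) / (1 - cnj a2 * z)) \<noteq> 0"
      unfolding mob_def e2_def .
    have Dn: "(1 + cnj a1 * e2 * a2) - (cnj a2 + cnj a1 * e2) * z
        = (1 - cnj a2 * z) * (1 - cnj a1 * (e2 * (z - a2) / (1 - cnj a2 * z)))"
      using B by (simp add: field_simps)
    have Dn0: "(1 + cnj a1 * e2 * a2) - (cnj a2 + cnj a1 * e2) * z \<noteq> 0" unfolding Dn using B B1 by simp
    have C0: "1 + a1 * inverse e2 * cnj a2 \<noteq> 0" using c0 cC by (metis complex_cnj_zero_iff)
    have "mob a1 t1 (mob a2 t2 z) = e1 * (e2 * (z - a2) / (1 - cnj a2 * z) - a1) / (1 - cnj a1 * (e2 * (z - a2) / (1 - cnj a2 * z)))"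
      unfolding mob_def e1_def e2_def ..
    also have "\<dots> = (e1 * e2 * (1 + a1 * inverse e2 * cnj a2) / (1 + cnj a1 * e2 * a2)) * (z - (e2 * a2 + a1) / (e2 * (1 + a1 * inverse e2 * cnj a2)))
       / (1 - ((inverse e2 * cnj a2 + cnj a1) / (inverse e2 * (1 + cnj a1 * e2 * a2))) * z)"
      by (rule comp_alg[OF e2n(2) B Dn0 _ C0]) (use c0 in \<open>simp add: c_def\<close>)
    also have "\<dots> = mob a t z" unfolding mob_def t u_def ca unfolding a_def cC unfolding c_def ..
    finally show ?thesis .
  qed
  then show ?thesis using alt by blast
qed

lemma real_aux2: "(A::real) > 0 \<Longrightarrow> Z > 0 \<Longrightarrow> Q > 0 \<Longrightarrow> 1 / (A * Z / Q\<^sup>2)\<^sup>2 * (A / Q\<^sup>2)\<^sup>2 = 1 / Z\<^sup>2"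
  by (simp add: field_simps power2_eq_square)

lemma cnj_a_a: "1 - cnj a * a = complex_of_real (1 - (cmod a)\<^sup>2)"
proof -
  have "complex_of_real ((cmod a)\<^sup>2) = cnj a * a" by (simp only: cmod_sq mult.commute)
  then show ?thesis by (metis of_real_1 of_real_diff)
qed

lemma mob_dens: assumes a: "cmod a < 1" and z: "cmod z < 1"
  shows "hyp_density (mob a t z) * (cmod (exp (\<i> * complex_of_real t) * (1 - cnj a * a) / (1 - cnj a * z)\<^sup>2))\<^sup>2 = hyp_density z"
proof -
  have A: "1 - (cmod a)\<^sup>2 > 0" "1 - (cmod z)\<^sup>2 > 0" using a z by (simp_all add: abs_square_less_1)
  have Q: "cmod (1 - cnj a * z) > 0" using mob_den[OF a] z by simp
  have n: "cmod (exp (\<i> * complex_of_real t) * (1 - cnj a * a) / (1 - cnj a * z)\<^sup>2) = (1 - (cmod a)\<^sup>2) / (cmod (1 - cnj a * z))\<^sup>2"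
  proof -
    have nx: "cmod (complex_of_real (1 - (cmod a)\<^sup>2)) = 1 - (cmod a)\<^sup>2" by (simp only: norm_of_real abs_of_pos[OF A(1)])
    show ?thesis unfolding cnj_a_a by (simp only: norm_mult norm_divide norm_power norm_exp_it nx)
  qed
  show ?thesis unfolding n hyp_density_def mob_norm[OF a less_imp_le[OF z]]
    using real_aux2[OF A Q] by simp
qed

lemma real_aux3:
  fixes al r d Qu Qv :: real
  assumes "0 \<le> d" "0 \<le> al" "al < 1" "r < 1" "Qu \<ge> 1 - al" "Qv \<ge> 1 - r"
  shows "(1 - al\<^sup>2) * d / (Qu * Qv) \<le> 2 / (1 - r) * d"
proof -
  have p: "(1 - al) * (1 - r) > 0" using assms by simp
  have "Qu * Qv \<ge> (1 - al) * (1 - r)" using assms by (intro mult_mono) auto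
  moreover have "(1 - al\<^sup>2) * d \<le> 2 * (1 - al) * d"
  proof -
    have "2 * (1 - al) - (1 - al\<^sup>2) = (1 - al)\<^sup>2" by (simp add: power2_eq_square algebra_simps)
    then have "1 - al\<^sup>2 \<le> 2 * (1 - al)" using zero_le_power2[of "1 - al"] by linarith
    then show ?thesis using assms(1) by (intro mult_right_mono) auto
  qed
  ultimately have "(1 - al\<^sup>2) * d / (Qu * Qv) \<le> 2 * (1 - al) * d / ((1 - al) * (1 - r))"
    using p assms by (intro frac_le) (auto intro: mult_nonneg_nonneg)
  also have "\<dots> = 2 / (1 - r) * d"
  proof -
    have nz: "1 - al \<noteq> 0" using assms by auto
    have "2 * (1 - al) * d / ((1 - al) * (1 - r)) = ((1 - al) * (2 * d)) / ((1 - al) * (1 - r))" by (simp add: ac_simps)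
    also have "\<dots> = (2 * d) / (1 - r)" using nz by (rule nonzero_mult_divide_mult_cancel_left)
    finally show ?thesis by simp
  qed
  finally show ?thesis .
qed

lemma mob_lip: assumes a: "cmod a < 1" and r: "r < 1" and u: "cmod u \<le> r" and v: "cmod v \<le> r"
  shows "cmod (mob a t u - mob a t v) \<le> 2 / (1 - r) * cmod (u - v)"
proof -
  have u1: "cmod u \<le> 1" "cmod v \<le> 1" using u v r by auto
  have du: "1 - cnj a * u \<noteq> 0" "1 - cnj a * v \<noteq> 0" using mob_den[OF a] u1 by auto
  have diff: "mob a t u - mob a t v = exp (\<i> * complex_of_real t) * (1 - cnj a * a) * (u - v) / ((1 - cnj a * u) * (1 - cnj a * v))"
    unfolding mob_def using du by (simp add: field_simps)
  have A: "1 - (cmod a)\<^sup>2 > 0" using a by (simp add: abs_square_less_1)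
  have n: "cmod (mob a t u - mob a t v) = (1 - (cmod a)\<^sup>2) * cmod (u - v) / (cmod (1 - cnj a * u) * cmod (1 - cnj a * v))"
  proof -
    have nx: "cmod (complex_of_real (1 - (cmod a)\<^sup>2)) = 1 - (cmod a)\<^sup>2" by (simp only: norm_of_real abs_of_pos[OF A])
    show ?thesis unfolding diff cnj_a_a by (simp only: norm_mult norm_divide norm_power norm_exp_it nx)
  qed
  have lb: "cmod (1 - cnj a * w) \<ge> 1 - cmod a" "cmod (1 - cnj a * w) \<ge> 1 - r" if "cmod w \<le> r" for w
  proof -
    have t: "cmod (1 - cnj a * w) \<ge> 1 - cmod a * cmod w"
      using norm_triangle_ineq2[of 1 "cnj a * w"] by (simp add: norm_mult)
    have "cmod a * cmod w \<le> cmod a * 1" using that r by (intro mult_left_mono) auto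
    then show "cmod (1 - cnj a * w) \<ge> 1 - cmod a" using t by simp
    have "cmod a * cmod w \<le> 1 * cmod w" using a by (intro mult_right_mono) auto
    then show "cmod (1 - cnj a * w) \<ge> 1 - r" using t that by simp
  qed
  show ?thesis unfolding n by (rule real_aux3) (use a r lb(1)[OF u] lb(2)[OF v] in auto)
qed


definition C2 :: "real^2 \<Rightarrow> complex" where "C2 x = Complex (x$1) (x$2)"
definition R2 :: "complex \<Rightarrow> real^2" where "R2 z = vector [Re z, Im z]"

lemma R2_comp [simp]: "(R2 z)$1 = Re z" "(R2 z)$2 = Im z"
  by (simp_all add: R2_def)

lemma C2_R2 [simp]: "C2 (R2 z) = z" by (simp add: C2_def complex_eq_iff)
lemma R2_C2 [simp]: "R2 (C2 x) = x" by (simp add: C2_def vec_eq_iff forall_2)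

lemma linear_C2: "linear C2"
  by (auto simp: linear_iff C2_def complex_eq_iff)
lemma linear_R2: "linear R2"
  by (auto simp: linear_iff R2_def vec_eq_iff forall_2)

lemma bl_C2: "bounded_linear C2" using linear_C2 by (simp add: linear_conv_bounded_linear)
lemma bl_R2: "bounded_linear R2" using linear_R2 by (simp add: linear_conv_bounded_linear)

lemma cont_C2: "continuous_on A C2" by (rule linear_continuous_on[OF bl_C2])
lemma cont_R2: "continuous_on A R2" by (rule linear_continuous_on[OF bl_R2])

lemma C2_vimage: "C2 -` A = R2 ` A"
proof (rule set_eqI)
  fix x show "x \<in> C2 -` A \<longleftrightarrow> x \<in> R2 ` A"
    by (metis R2_C2 C2_R2 image_iff vimage_eq)
qed

lemma C2_box: "C2 -` box l u = box (R2 l) (R2 u)"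
  by (auto simp: mem_box_cart mem_box Basis_complex_def inner_complex_def forall_2 C2_def)

lemma Basis2: "(Basis::(real^2) set) = {axis 1 1, axis 2 1}"
  by (auto simp: Basis_vec_def) (metis exhaust_2)

lemma prod_Basis2: "(\<Prod>b\<in>(Basis::(real^2) set). f b) = f (axis 1 1) * f (axis 2 1)"
proof -
  have B: "(Basis::(real^2) set) = {axis 1 1, axis 2 1}"
    by (auto simp: Basis_vec_def) (metis exhaust_2)
  have n: "axis 1 1 \<noteq> (axis 2 1 :: real^2)" by (simp add: axis_eq_axis)
  show ?thesis unfolding B using n by simp
qed

lemma distr_C2: "distr lborel borel C2 = lborel"
proof (rule lborel_eqI[symmetric])
  show "sets (distr lborel borel C2) = sets borel" by simp
  fix l u :: complex
  assume le: "\<And>b. b \<in> Basis \<Longrightarrow> l \<bullet> b \<le> u \<bullet> b"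
  have m: "C2 \<in> lborel \<rightarrow>\<^sub>M borel"
  proof -
    have "C2 \<in> borel_measurable borel" by (intro borel_measurable_continuous_onI cont_C2)
    then show ?thesis by (simp add: measurable_cong_sets[OF sets_lborel refl])
  qed
  have "emeasure (distr lborel borel C2) (box l u) = emeasure lborel (C2 -` box l u)"
    using m by (simp add: emeasure_distr)
  also have "\<dots> = emeasure lborel (box (R2 l) (R2 u))" unfolding C2_box ..
  also have "\<dots> = (\<Prod>b\<in>Basis. (u - l) \<bullet> b)"
  proof -
    have l1: "Re l \<le> Re u" "Im l \<le> Im u" using le[of 1] le[of \<i>] by (auto simp: Basis_complex_def inner_complex_def)
    have "\<forall>b\<in>Basis. R2 l \<bullet> b \<le> R2 u \<bullet> b" unfolding Basis2 using l1 by (simp add: inner_axis)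
    then show ?thesis by (simp add: emeasure_lborel_box prod_Basis2 inner_axis Basis_complex_def inner_complex_def)
  qed
  finally show "emeasure (distr lborel borel C2) (box l u) = (\<Prod>b\<in>Basis. (u - l) \<bullet> b)" .
qed

lemma meas_lborel_borel: "f \<in> borel_measurable lborel \<Longrightarrow> f \<in> borel_measurable borel"
  by (simp add: measurable_cong_sets[OF sets_lborel refl])

lemma TR: fixes h :: "complex \<Rightarrow> real"
  assumes A: "compact A" and h: "continuous_on A h"
  shows "(LINT z:A|lborel. h z) = (LINT x:(R2 ` A)|lborel. h (C2 x))"
proof -
  have int: "integrable lborel (\<lambda>z. indicator A z *\<^sub>R h z)" by (rule borel_integrable_compact[OF A h])
  have meas: "(\<lambda>z. indicator A z *\<^sub>R h z) \<in> borel_measurable borel"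
    using borel_measurable_integrable[OF int] by (rule meas_lborel_borel)
  have mC: "C2 \<in> lborel \<rightarrow>\<^sub>M borel"
  proof -
    have "C2 \<in> borel_measurable borel" by (intro borel_measurable_continuous_onI cont_C2)
    then show ?thesis by (simp add: measurable_cong_sets[OF sets_lborel refl])
  qed
  have "(LINT z:A|lborel. h z) = integral\<^sup>L (distr lborel borel C2) (\<lambda>z. indicator A z *\<^sub>R h z)"
    unfolding set_lebesgue_integral_def distr_C2 ..
  also have "\<dots> = (LINT x|lborel. indicator A (C2 x) *\<^sub>R h (C2 x))"
    by (rule integral_distr[OF mC meas])
  also have "\<dots> = (LINT x:(R2 ` A)|lborel. h (C2 x))"
  proof -
    have "indicator A (C2 x) = (indicator (R2 ` A) x :: real)" for x
      using C2_vimage[of A] by (auto simp: indicator_def)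
    then show ?thesis unfolding set_lebesgue_integral_def by simp
  qed
  finally show ?thesis .
qed

lemma LH: fixes h :: "'a::euclidean_space \<Rightarrow> real"
  assumes A: "compact A" and h: "continuous_on A h"
  shows "(LINT x:A|lborel. h x) = integral A h" "h integrable_on A" "h absolutely_integrable_on A"
proof -
  have si: "set_integrable lborel A h" unfolding set_integrable_def by (rule borel_integrable_compact[OF A h])
  show "(LINT x:A|lborel. h x) = integral A h" "h integrable_on A" using set_borel_integral_eq_integral[OF si] by auto
  have si2: "set_integrable lborel A (\<lambda>x. norm (h x))" unfolding set_integrable_def
    by (rule borel_integrable_compact[OF A]) (intro continuous_intros h)
  show "h absolutely_integrable_on A" unfolding absolutely_integrable_on_def
    using set_borel_integral_eq_integral(1)[OF si] set_borel_integral_eq_integral(1)[OF si2] by auto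
qed

lemma C2_axis [simp]: "C2 (axis 1 1) = 1" "C2 (axis 2 1) = \<i>"
  by (simp_all add: C2_def complex_eq_iff axis_def)

lemma det_mult_c: "det (matrix (\<lambda>h. R2 (c * C2 h))) = (cmod c)\<^sup>2"
proof -
  have "det (matrix (\<lambda>h. R2 (c * C2 h))) = Re c * Re c + Im c * Im c" by (simp add: det_2 matrix_def)
  also have "\<dots> = (cmod c)\<^sup>2" using cmod_power2[of c] by (simp add: power2_eq_square)
  finally show ?thesis .
qed

lemma cov_complex:
  fixes g g' :: "complex \<Rightarrow> complex" and f :: "complex \<Rightarrow> real"
  assumes S: "compact S" and dg: "\<And>x. x \<in> S \<Longrightarrow> (g has_field_derivative g' x) (at x)"
    and inj: "inj_on g S" and cf: "continuous_on (g ` S) f" and cg': "continuous_on S g'"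
  shows "(LINT z:(g ` S)|lborel. f z) = (LINT x:S|lborel. (cmod (g' x))\<^sup>2 * f (g x))"
proof -
  have cg: "continuous_on S g"
    using dg by (meson DERIV_isCont continuous_at_imp_continuous_on)
  have gS: "compact (g ` S)" by (rule compact_continuous_image[OF cg S])
  define S2 where "S2 = R2 ` S"
  have S2: "compact S2" unfolding S2_def by (rule compact_continuous_image[OF cont_R2 S])
  have C2S2: "C2 ` S2 = S" unfolding S2_def by (simp add: image_image)
  define G where "G = (\<lambda>x. R2 (g (C2 x)))"
  define G' where "G' = (\<lambda>x h. R2 (g' (C2 x) * C2 h))"
  have dG: "(G has_derivative G' x) (at x within S2)" if x: "x \<in> S2" for x
  proof -
    have xS: "C2 x \<in> S" using x C2S2 by blast
    have d1: "(C2 has_derivative C2) (at x within S2)" by (rule bounded_linear_imp_has_derivative[OF bl_C2])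
    have d2: "(g has_derivative (\<lambda>h. g' (C2 x) * h)) (at (C2 x))"
      using dg[OF xS] unfolding has_field_derivative_def .
    have d3: "((\<lambda>x. g (C2 x)) has_derivative (\<lambda>h. g' (C2 x) * C2 h)) (at x within S2)"
      by (rule has_derivative_compose[OF d1 d2])
    have d4: "(R2 has_derivative R2) (at (g (C2 x)))" by (rule bounded_linear_imp_has_derivative[OF bl_R2])
    show ?thesis unfolding G_def G'_def using has_derivative_compose[OF d3 d4] by simp
  qed
  have injG: "inj_on G S2"
  proof (rule inj_onI)
    fix x y assume "x \<in> S2" "y \<in> S2" "G x = G y"
    then have "g (C2 x) = g (C2 y)" "C2 x \<in> S" "C2 y \<in> S" unfolding G_def using C2S2
      by (metis C2_R2, blast, blast)
    then have "C2 x = C2 y" using inj by (meson inj_onD)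
    then show "x = y" by (metis R2_C2)
  qed
  have GS: "G ` S2 = R2 ` (g ` S)" unfolding G_def S2_def by (simp add: image_image)
  define F where "F = (\<lambda>y. f (C2 y))"
  define H where "H = (\<lambda>x. (cmod (g' (C2 x)))\<^sup>2 * f (g (C2 x)))"
  have cF: "continuous_on (R2 ` (g ` S)) F" unfolding F_def
    by (rule continuous_on_compose2[OF cf cont_C2]) (auto simp: image_image)
  have cgf: "continuous_on S (\<lambda>x. (cmod (g' x))\<^sup>2 * f (g x))"
    by (intro continuous_intros cg' continuous_on_compose2[OF cf cg]) auto
  have cH: "continuous_on S2 H" unfolding H_def
    by (rule continuous_on_compose2[OF cgf cont_C2]) (simp add: C2S2)
  have gS2: "compact (R2 ` (g ` S))" by (rule compact_continuous_image[OF cont_R2 gS])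
  have Fabs: "(\<lambda>y. F y *\<^sub>R (1::real^1)) absolutely_integrable_on (G ` S2)"
    unfolding GS by (rule absolutely_integrable_scaleR_right[OF LH(3)[OF gS2 cF]])
  note cov = has_absolute_integral_change_of_variables_compact[OF S2 dG injG,
      of "\<lambda>y. F y *\<^sub>R (1::real^1)" "integral (G ` S2) (\<lambda>y. F y *\<^sub>R (1::real^1))"]
  have e1: "integral S2 (\<lambda>x. \<bar>det (matrix (G' x))\<bar> *\<^sub>R (F (G x) *\<^sub>R (1::real^1))) = integral (G ` S2) (\<lambda>y. F y *\<^sub>R (1::real^1))"
    using cov Fabs by blast
  have e2: "\<bar>det (matrix (G' x))\<bar> *\<^sub>R (F (G x) *\<^sub>R (1::real^1)) = H x *\<^sub>R 1" for x
    unfolding G'_def det_mult_c H_def F_def G_def by simp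
  have e3: "integral S2 (\<lambda>x. H x *\<^sub>R (1::real^1)) = integral S2 H *\<^sub>R 1"
    by (rule integral_unique[OF has_integral_scaleR_left[OF integrable_integral[OF LH(2)[OF S2 cH]]]])
  have e4: "integral (R2 ` (g ` S)) (\<lambda>x. F x *\<^sub>R (1::real^1)) = integral (R2 ` (g ` S)) F *\<^sub>R 1"
    by (rule integral_unique[OF has_integral_scaleR_left[OF integrable_integral[OF LH(2)[OF gS2 cF]]]])
  have e5: "integral S2 H = integral (R2 ` (g ` S)) F"
    using e1 unfolding e2 GS e3 e4 by (simp add: scaleR_cancel_right)
  have "(LINT z:(g ` S)|lborel. f z) = (LINT x:(R2 ` (g ` S))|lborel. F x)"
    unfolding F_def by (rule TR[OF gS cf])
  also have "\<dots> = integral (R2 ` (g ` S)) F" by (rule LH(1)[OF gS2 cF])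
  also have "\<dots> = integral S2 H" using e5 by simp
  also have "\<dots> = (LINT x:S2|lborel. H x)" by (rule LH(1)[OF S2 cH, symmetric])
  also have "\<dots> = (LINT x:S|lborel. (cmod (g' x))\<^sup>2 * f (g x))"
    unfolding H_def S2_def by (rule TR[OF S cgf, symmetric])
  finally show ?thesis .
qed


lemma cont_dens: assumes "r < 1" shows "continuous_on (cball 0 r) hyp_density"
proof -
  have "\<forall>z\<in>cball 0 r. (1 - (cmod z)\<^sup>2)\<^sup>2 \<noteq> 0"
  proof
    fix z :: complex assume "z \<in> cball 0 r"
    then have "cmod z < 1" using assms by simp
    then have "(cmod z)\<^sup>2 < 1" by (simp add: abs_square_less_1)
    then show "(1 - (cmod z)\<^sup>2)\<^sup>2 \<noteq> 0" by simp
  qed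
  then show ?thesis unfolding hyp_density_def[abs_def]
    by (intro continuous_intros) auto
qed

lemma dens_nonneg: "hyp_density z \<ge> 0" by (simp add: hyp_density_def)

lemma norm_diff_sq_inner: "(cmod (z - p))\<^sup>2 = (cmod z)\<^sup>2 - 2 * (p \<bullet> z) + (cmod p)\<^sup>2"
  by (simp add: power2_norm_eq_inner inner_diff_left inner_diff_right inner_commute algebra_simps)

lemma closed_voronoi: "closed (voronoi P p)"
proof -
  have "voronoi P p = (\<Inter>q\<in>P. {z. cmod (z - p) \<le> cmod (z - q)})" unfolding voronoi_def by auto
  moreover have "\<forall>q\<in>P. closed {z. cmod (z - p) \<le> cmod (z - q)}"
    by (intro ballI closed_Collect_le continuous_intros)
  ultimately show ?thesis by (simp add: closed_INT)
qed

lemma voronoi_neg: assumes "p \<noteq> q" and that: "p \<in> P" "q \<in> P"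
  shows "negligible (voronoi P p \<inter> voronoi P q)"
proof -
  have "voronoi P p \<inter> voronoi P q \<subseteq> {z. (2 *\<^sub>R (q - p)) \<bullet> z = (cmod q)\<^sup>2 - (cmod p)\<^sup>2}"
  proof
    fix z assume "z \<in> voronoi P p \<inter> voronoi P q"
    then have "cmod (z - p) = cmod (z - q)" using that unfolding voronoi_def using that unfolding voronoi_def by (auto intro: order_antisym)
    then have "(cmod (z - p))\<^sup>2 = (cmod (z - q))\<^sup>2" by simp
    then show "z \<in> {z. (2 *\<^sub>R (q - p)) \<bullet> z = (cmod q)\<^sup>2 - (cmod p)\<^sup>2}"
      unfolding norm_diff_sq_inner by (simp add: inner_diff_left algebra_simps)
  qed
  moreover have "negligible {z. (2 *\<^sub>R (q - p)) \<bullet> z = (cmod q)\<^sup>2 - (cmod p)\<^sup>2}"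
    by (rule negligible_hyperplane) (use assms in simp)
  ultimately show ?thesis using negligible_subset by blast
qed

lemma exp_i_dist: "cmod (exp (\<i> * complex_of_real x) - exp (\<i> * complex_of_real y)) \<le> \<bar>x - y\<bar>"
proof -
  have "exp (\<i> * complex_of_real x) = exp (\<i> * complex_of_real y) * exp (\<i> * complex_of_real (x - y))"
    by (simp add: exp_add[symmetric] algebra_simps)
  then have "exp (\<i> * complex_of_real x) - exp (\<i> * complex_of_real y) = exp (\<i> * complex_of_real y) * (exp (\<i> * complex_of_real (x - y)) - 1)"
    by (simp add: algebra_simps)
  then have "cmod (exp (\<i> * complex_of_real x) - exp (\<i> * complex_of_real y)) = 2 * \<bar>sin ((x - y) / 2)\<bar>"
    by (simp only: norm_mult dist_exp_i_1 norm_exp_i_times mult_1_left)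
  also have "\<dots> \<le> 2 * \<bar>(x - y) / 2\<bar>" using abs_sin_x_le_abs_x[of "(x - y) / 2"] by simp
  finally show ?thesis by simp
qed

lemma fill_bound:
  assumes fin: "finite P" and ne: "P \<noteq> {}" and sub: "P \<subseteq> cball 0 r" and r: "r < 1"
    and hd: "hyp_disk 0 R = cball 0 r"
    and p: "p \<in> P" and u: "u \<in> cball 0 r \<inter> voronoi P p"
  shows "cmod (u - p) \<le> fill_dist R P"
proof -
  have bb: "bdd_below ((\<lambda>q. cmod (z - q)) ` P)" for z by (rule bdd_belowI[of _ 0]) auto
  have i1: "(INF q\<in>P. cmod (u - q)) = cmod (u - p)"
  proof (rule antisym)
    show "(INF q\<in>P. cmod (u - q)) \<le> cmod (u - p)" by (rule cINF_lower[OF bb p])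
    show "cmod (u - p) \<le> (INF q\<in>P. cmod (u - q))"
      by (rule cINF_greatest[OF ne]) (use u in \<open>auto simp: voronoi_def\<close>)
  qed
  obtain p0 where p0: "p0 \<in> P" using ne by blast
  have ba: "bdd_above ((\<lambda>z. INF q\<in>P. cmod (z - q)) ` cball 0 r)"
  proof (rule bdd_aboveI[of _ 2])
    fix x assume "x \<in> (\<lambda>z. INF q\<in>P. cmod (z - q)) ` cball 0 r"
    then obtain z where z: "z \<in> cball 0 r" and x: "x = (INF q\<in>P. cmod (z - q))" by blast
    have "x \<le> cmod (z - p0)" unfolding x by (rule cINF_lower[OF bb p0])
    also have "\<dots> \<le> cmod z + cmod p0" by (rule norm_triangle_ineq4)
    also have "\<dots> \<le> 2" using z p0 sub r by auto
    finally show "x \<le> 2" .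
  qed
  have "cmod (u - p) = (INF q\<in>P. cmod (u - q))" using i1 by simp
  also have "\<dots> \<le> (SUP z\<in>cball 0 r. INF q\<in>P. cmod (z - q))"
    by (rule cSUP_upper[OF _ ba]) (use u in auto)
  also have "\<dots> = fill_dist R P" unfolding fill_dist_def hd ..
  finally show ?thesis .
qed

lemma cells:
  fixes P :: "complex set" and f :: "complex \<Rightarrow> real"
  assumes fin: "finite P" and ne: "P \<noteq> {}" and sub: "P \<subseteq> cball 0 r" and r: "r < 1"
    and cf: "continuous_on (cball 0 r) f"
  shows "integral (cball 0 r) (f :: complex \<Rightarrow> real) = (\<Sum>p\<in>P. integral (cball 0 r \<inter> voronoi P p) f)"
proof -
  define Cp where "Cp = (\<lambda>p. cball 0 r \<inter> voronoi P p)"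
  have cpt: "compact (Cp p)" for p unfolding Cp_def by (intro compact_Int_closed closed_voronoi) auto
  have pin: "p \<in> Cp p" if "p \<in> P" for p using that sub unfolding Cp_def voronoi_def by auto
  have inj: "inj_on Cp P"
  proof (rule inj_onI)
    fix p q assume pq: "p \<in> P" "q \<in> P" "Cp p = Cp q"
    then have "p \<in> Cp q" using pin by auto
    then have "cmod (p - q) \<le> cmod (p - p)" using pq unfolding Cp_def voronoi_def by auto
    then show "p = q" by simp
  qed
  have un: "\<Union> (Cp ` P) = cball 0 r"
  proof
    show "\<Union> (Cp ` P) \<subseteq> cball 0 r" unfolding Cp_def by auto
    show "cball 0 r \<subseteq> \<Union> (Cp ` P)"
    proof
      fix z :: complex assume z: "z \<in> cball 0 r"
      define m where "m = Min ((\<lambda>q. cmod (z - q)) ` P)"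
      have "m \<in> (\<lambda>q. cmod (z - q)) ` P" unfolding m_def using fin ne by (intro Min_in) auto
      then obtain p where p: "p \<in> P" "cmod (z - p) = m" by auto
      have "\<forall>q\<in>P. cmod (z - p) \<le> cmod (z - q)" unfolding p(2) m_def using fin by auto
      then have "z \<in> Cp p" using z unfolding Cp_def voronoi_def by auto
      then show "z \<in> \<Union> (Cp ` P)" using p by auto
    qed
  qed
  have pw: "pairwise (\<lambda>S S'. negligible (S \<inter> S')) (Cp ` P)"
  proof (rule pairwiseI)
    fix S S' assume "S \<in> Cp ` P" "S' \<in> Cp ` P" "S \<noteq> S'"
    then obtain p q where pq: "p \<in> P" "q \<in> P" "S = Cp p" "S' = Cp q" "p \<noteq> q" by auto
    have "S \<inter> S' \<subseteq> voronoi P p \<inter> voronoi P q" using pq unfolding Cp_def by auto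
    then show "negligible (S \<inter> S')" using voronoi_neg[OF pq(5) pq(1) pq(2)] negligible_subset by blast
  qed
  have hi: "(f has_integral integral S f) S" if SS: "S \<in> Cp ` P" for S
  proof -
    obtain p where "S = Cp p" using SS by auto
    moreover have "continuous_on (Cp p) f" using cf unfolding Cp_def by (rule continuous_on_subset) auto
    ultimately show ?thesis using LH(2)[OF cpt] by (simp add: integrable_integral)
  qed
  have "(f has_integral (\<Sum>S\<in>Cp ` P. integral S f)) (\<Union> (Cp ` P))"
    by (rule has_integral_Union[OF finite_imageI[OF fin] hi pw])
  then have "integral (cball 0 r) f = (\<Sum>S\<in>Cp ` P. integral S f)" unfolding un by (rule integral_unique)
  also have "\<dots> = (\<Sum>p\<in>P. integral (Cp p) f)" by (rule sum.reindex[OF inj, unfolded o_def])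
  finally show ?thesis unfolding Cp_def .
qed

lemma quad:
  fixes P :: "complex set" and \<phi> :: "complex \<Rightarrow> real"
  assumes fin: "finite P" and ne: "P \<noteq> {}" and sub: "P \<subseteq> cball 0 r" and r: "r < 1"
    and hd: "hyp_disk 0 R = cball 0 r"
    and c\<phi>: "continuous_on (cball 0 r) \<phi>"
    and lip: "\<And>u v. u \<in> cball 0 r \<Longrightarrow> v \<in> cball 0 r \<Longrightarrow> \<bar>\<phi> u - \<phi> v\<bar> \<le> \<Lambda> * cmod (u - v)"
    and \<Lambda>: "\<Lambda> \<ge> 0"
  shows "\<bar>integral (cball 0 r) (\<lambda>u. hyp_density u * \<phi> u) - (\<Sum>p\<in>P. quad_weight R P p * \<phi> p)\<bar>
          \<le> \<Lambda> * fill_dist R P * integral (cball 0 r) hyp_density"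
proof -
  define Cp where "Cp = (\<lambda>p. cball 0 r \<inter> voronoi P p)"
  define fd where "fd = fill_dist R P"
  have cpt: "compact (Cp p)" for p unfolding Cp_def by (intro compact_Int_closed closed_voronoi) auto
  have cd: "continuous_on (cball 0 r) hyp_density" by (rule cont_dens[OF r])
  have cdp: "continuous_on (cball 0 r) (\<lambda>u. hyp_density u * \<phi> u)" by (intro continuous_intros cd c\<phi>)
  have sC: "Cp p \<subseteq> cball 0 r" for p unfolding Cp_def by auto
  have cdC: "continuous_on (Cp p) hyp_density" for p using cd sC by (rule continuous_on_subset)
  have cdpC: "continuous_on (Cp p) (\<lambda>u. hyp_density u * \<phi> u)" for p using cdp sC by (rule continuous_on_subset)
  have qw: "quad_weight R P p = integral (Cp p) hyp_density" for p
    using LH(1)[OF cpt cdC] unfolding quad_weight_def hd Cp_def .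
  have e1: "integral (cball 0 r) (\<lambda>u. hyp_density u * \<phi> u) = (\<Sum>p\<in>P. integral (Cp p) (\<lambda>u. hyp_density u * \<phi> u))"
    unfolding Cp_def by (rule cells[OF fin ne sub r cdp])
  have e2: "integral (cball 0 r) hyp_density = (\<Sum>p\<in>P. integral (Cp p) hyp_density)"
    unfolding Cp_def by (rule cells[OF fin ne sub r cd])
  have each: "\<bar>integral (Cp p) (\<lambda>u. hyp_density u * \<phi> u) - quad_weight R P p * \<phi> p\<bar> \<le> \<Lambda> * fd * integral (Cp p) hyp_density"
    if p: "p \<in> P" for p
  proof -
    have i1: "(\<lambda>u. hyp_density u * \<phi> u) integrable_on Cp p" by (rule LH(2)[OF cpt cdpC])
    have i2: "(\<lambda>u. hyp_density u * \<phi> p) integrable_on Cp p" by (rule LH(2)[OF cpt]) (intro continuous_intros cdC)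
    have i3: "(\<lambda>u. hyp_density u * (\<Lambda> * fd)) integrable_on Cp p" by (rule LH(2)[OF cpt]) (intro continuous_intros cdC)
    have "quad_weight R P p * \<phi> p = integral (Cp p) (\<lambda>u. hyp_density u * \<phi> p)"
      unfolding qw by (simp add: integral_mult_left)
    then have "integral (Cp p) (\<lambda>u. hyp_density u * \<phi> u) - quad_weight R P p * \<phi> p
        = integral (Cp p) (\<lambda>u. hyp_density u * \<phi> u - hyp_density u * \<phi> p)"
      using integral_diff[OF i1 i2] by simp
    also have "\<bar>\<dots>\<bar> \<le> integral (Cp p) (\<lambda>u. hyp_density u * (\<Lambda> * fd))"
    proof -
    have "norm (integral (Cp p) (\<lambda>u. hyp_density u * \<phi> u - hyp_density u * \<phi> p)) \<le> integral (Cp p) (\<lambda>u. hyp_density u * (\<Lambda> * fd))"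
    proof (rule integral_norm_bound_integral)
      show "(\<lambda>u. hyp_density u * \<phi> u - hyp_density u * \<phi> p) integrable_on Cp p" using i1 i2 by (rule integrable_diff)
      show "(\<lambda>u. hyp_density u * (\<Lambda> * fd)) integrable_on Cp p" by (rule i3)
      fix u assume u: "u \<in> Cp p"
      have pr: "p \<in> cball 0 r" "u \<in> cball 0 r" using p sub u sC[of p] by auto
      have "\<bar>hyp_density u * \<phi> u - hyp_density u * \<phi> p\<bar> = hyp_density u * \<bar>\<phi> u - \<phi> p\<bar>"
        using dens_nonneg[of u] by (simp add: abs_mult right_diff_distrib[symmetric])
      also have "\<dots> \<le> hyp_density u * (\<Lambda> * cmod (u - p))"
        by (rule mult_left_mono[OF lip[OF pr(2) pr(1)] dens_nonneg])
      also have "\<dots> \<le> hyp_density u * (\<Lambda> * fd)"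
        using fill_bound[OF fin ne sub r hd p, of u] u \<Lambda> unfolding Cp_def fd_def
        by (intro mult_left_mono dens_nonneg) auto
      finally show "norm (hyp_density u * \<phi> u - hyp_density u * \<phi> p) \<le> hyp_density u * (\<Lambda> * fd)" by simp
    qed
    then show ?thesis by simp
    qed
    also have "\<dots> = \<Lambda> * fd * integral (Cp p) hyp_density" by (simp add: integral_mult_left mult.commute)
    finally show ?thesis .
  qed
  have "\<bar>integral (cball 0 r) (\<lambda>u. hyp_density u * \<phi> u) - (\<Sum>p\<in>P. quad_weight R P p * \<phi> p)\<bar>
      = \<bar>\<Sum>p\<in>P. (integral (Cp p) (\<lambda>u. hyp_density u * \<phi> u) - quad_weight R P p * \<phi> p)\<bar>"
    unfolding e1 sum_subtractf ..
  also have "\<dots> \<le> (\<Sum>p\<in>P. \<bar>integral (Cp p) (\<lambda>u. hyp_density u * \<phi> u) - quad_weight R P p * \<phi> p\<bar>)"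
    by (rule sum_abs)
  also have "\<dots> \<le> (\<Sum>p\<in>P. \<Lambda> * fd * integral (Cp p) hyp_density)" by (rule sum_mono[OF each])
  also have "\<dots> = \<Lambda> * fd * integral (cball 0 r) hyp_density" unfolding e2 sum_distrib_left ..
  finally show ?thesis unfolding fd_def .
qed

lemma int_bound:
  fixes f g h :: "complex \<Rightarrow> real"
  assumes S: "compact S" and cf: "continuous_on S f" and cg: "continuous_on S g" and ch: "continuous_on S h"
    and b: "\<And>u. u \<in> S \<Longrightarrow> \<bar>f u - g u\<bar> \<le> h u"
  shows "\<bar>integral S f - integral S g\<bar> \<le> integral S h"
proof -
  have "norm (integral S (\<lambda>u. f u - g u)) \<le> integral S h"
    by (rule integral_norm_bound_integral) (use LH(2)[OF S] cf cg ch b in \<open>auto intro: integrable_diff\<close>)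
  then show ?thesis using integral_diff[OF LH(2)[OF S cf] LH(2)[OF S cg]] by simp
qed


lemma hyp0: "hyp_disk 0 R = cball 0 (tanh R)"
  using tanh_real_lt_1[of R] by (auto simp: hyp_disk_def)

lemma mob_0: "mob a t 0 = - (exp (\<i> * complex_of_real t) * a)" by (simp add: mob_def)

lemma mob_rot: "mob 0 th z = exp (\<i> * complex_of_real th) * z" by (simp add: mob_def)

lemma mob_self: "mob a t a = 0" by (simp add: mob_def)

lemma mob_inv2: assumes a: "cmod a < 1" and z: "cmod z < 1"
  shows "mob a t (mob (- (exp (\<i> * complex_of_real t) * a)) (- t) z) = z"
proof -
  have a': "cmod (- (exp (\<i> * complex_of_real t) * a)) < 1" using a by (simp add: norm_mult)
  have e: "- (exp (\<i> * complex_of_real (- t)) * - (exp (\<i> * complex_of_real t) * a)) = a"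
    by (simp add: exp_minus)
  show ?thesis using mob_inv[OF a' z, of "- t"] unfolding e by simp
qed

lemma cont_mob: assumes a: "cmod a < 1" shows "continuous_on (ball 0 1) (mob a t)"
proof -
  have "\<forall>z\<in>ball 0 1. 1 - cnj a * z \<noteq> 0" using mob_den[OF a] by auto
  then show ?thesis unfolding mob_def[abs_def] by (intro continuous_intros) auto
qed

lemma inj_mob: assumes a: "cmod a < 1" shows "inj_on (mob a t) (ball 0 1)"
  by (rule inj_on_inverseI[where g = "mob (- (exp (\<i> * complex_of_real t) * a)) (- t)"])
     (use mob_inv[OF a] in auto)

lemma mob_ball': "cmod a < 1 \<Longrightarrow> z \<in> ball 0 1 \<Longrightarrow> mob a t z \<in> ball 0 1"
  using mob_ball by auto

lemma hypz: assumes a: "cmod a < 1"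
  shows "hyp_disk (mob a t 0) R = mob a t ` cball 0 (tanh R)"
proof -
  define zi where "zi = - (exp (\<i> * complex_of_real t) * a)"
  have zi: "mob a t 0 = zi" unfolding zi_def by (rule mob_0)
  have zi1: "cmod zi < 1" unfolding zi_def using a by (simp add: norm_mult)
  have nm: "cmod ((z - zi) / (1 - cnj zi * z)) = cmod (mob zi (- t) z)" for z
    by (simp add: mob_def norm_mult norm_divide)
  have r1: "tanh R < 1" by (rule tanh_real_lt_1)
  show ?thesis unfolding zi
  proof
    show "hyp_disk zi R \<subseteq> mob a t ` cball 0 (tanh R)"
    proof
      fix z assume "z \<in> hyp_disk zi R"
      then have z: "cmod z < 1" "cmod (mob zi (- t) z) \<le> tanh R" unfolding hyp_disk_def nm by auto
      have "z = mob a t (mob zi (- t) z)" using mob_inv2[OF a z(1), of t] unfolding zi_def by simp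
      then show "z \<in> mob a t ` cball 0 (tanh R)" using z(2) by auto
    qed
    show "mob a t ` cball 0 (tanh R) \<subseteq> hyp_disk zi R"
    proof
      fix z assume "z \<in> mob a t ` cball 0 (tanh R)"
      then obtain u where u: "cmod u \<le> tanh R" "z = mob a t u" by auto
      have u1: "cmod u < 1" using u r1 by simp
      have "cmod z < 1" using mob_ball[OF a u1] u by simp
      moreover have "mob zi (- t) z = u" using mob_inv[OF a u1, of t] u unfolding zi_def by simp
      ultimately show "z \<in> hyp_disk zi R" unfolding hyp_disk_def nm using u by simp
    qed
  qed
qed

lemma cont_dens_ball: "continuous_on (ball 0 1) hyp_density"
proof -
  have "\<forall>z\<in>ball (0::complex) 1. (1 - (cmod z)\<^sup>2)\<^sup>2 \<noteq> 0"
  proof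
    fix z :: complex assume "z \<in> ball 0 1"
    then have "(cmod z)\<^sup>2 < 1" by (simp add: abs_square_less_1)
    then show "(1 - (cmod z)\<^sup>2)\<^sup>2 \<noteq> 0" by simp
  qed
  then show ?thesis unfolding hyp_density_def[abs_def] by (intro continuous_intros) auto
qed

lemma dmob_cont: assumes a: "cmod a < 1" and r: "r < 1"
  shows "continuous_on (cball 0 r) (\<lambda>u. exp (\<i> * complex_of_real t) * (1 - cnj a * a) / (1 - cnj a * u)\<^sup>2)"
proof -
  have "\<forall>z\<in>cball 0 r. (1 - cnj a * z)\<^sup>2 \<noteq> 0" using mob_den[OF a] r by auto
  then show ?thesis by (intro continuous_intros) auto
qed

lemma lip_apply: "K-lipschitz_on (ball 0 1) f \<Longrightarrow> x \<in> ball 0 1 \<Longrightarrow> y \<in> ball 0 1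
   \<Longrightarrow> \<bar>f x - f (y::complex)\<bar> \<le> K * cmod (x - y)"
  unfolding lipschitz_on_def by (auto simp: dist_real_def dist_norm)

lemma X_eq:
  fixes \<mu> \<nu> :: "complex \<Rightarrow> real"
  assumes a1: "cmod a1 < 1" and b: "cmod b < 1"
    and c\<mu>: "continuous_on (ball 0 1) \<mu>" and c\<nu>: "continuous_on (ball 0 1) \<nu>"
  shows "(LINT z:(hyp_disk (mob a1 t1 0) R)|lborel. hyp_density z * \<bar>\<mu> z - \<nu> (mob b s z)\<bar>)
       = integral (cball 0 (tanh R)) (\<lambda>u. hyp_density u * \<bar>\<mu> (mob a1 t1 u) - \<nu> (mob b s (mob a1 t1 u))\<bar>)"
proof -
  define r where "r = tanh R"
  have r: "r < 1" unfolding r_def by (rule tanh_real_lt_1)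
  define K where "K = cball (0::complex) r"
  have cK: "compact K" unfolding K_def by simp
  have hK: "K \<subseteq> ball 0 1" unfolding K_def using r by auto
  define f where "f = (\<lambda>z. hyp_density z * \<bar>\<mu> z - \<nu> (mob b s z)\<bar>)"
  have cm: "continuous_on (ball 0 1) (\<lambda>z. \<nu> (mob b s z))"
    by (rule continuous_on_compose2[OF c\<nu> cont_mob[OF b]]) (use mob_ball'[OF b] in auto)
  have cf: "continuous_on (ball 0 1) f" unfolding f_def
    by (intro continuous_intros cont_dens_ball c\<mu> cm)
  define g where "g = mob a1 t1"
  define g' where "g' = (\<lambda>u. exp (\<i> * complex_of_real t1) * (1 - cnj a1 * a1) / (1 - cnj a1 * u)\<^sup>2)"
  have img: "g ` K \<subseteq> ball 0 1" unfolding g_def using hK mob_ball'[OF a1] by auto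
  have dg: "(g has_field_derivative g' u) (at u)" if "u \<in> K" for u
    unfolding g_def g'_def by (rule mob_deriv) (use mob_den[OF a1] that hK in auto)
  have inj: "inj_on g K" unfolding g_def using inj_mob[OF a1] hK by (rule inj_on_subset)
  have cg': "continuous_on K g'" unfolding K_def g'_def by (rule dmob_cont[OF a1 r])
  have cfg: "continuous_on (g ` K) f" using cf img by (rule continuous_on_subset)
  have "(LINT z:(hyp_disk (mob a1 t1 0) R)|lborel. hyp_density z * \<bar>\<mu> z - \<nu> (mob b s z)\<bar>)
      = (LINT z:(g ` K)|lborel. f z)" unfolding hypz[OF a1] g_def K_def r_def f_def ..
  also have "\<dots> = (LINT u:K|lborel. (cmod (g' u))\<^sup>2 * f (g u))" by (rule cov_complex[OF cK dg inj cfg cg'])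
  also have "\<dots> = (LINT u:K|lborel. hyp_density u * \<bar>\<mu> (mob a1 t1 u) - \<nu> (mob b s (mob a1 t1 u))\<bar>)"
  proof (rule set_lebesgue_integral_cong)
    show "K \<in> sets lborel" unfolding K_def by simp
    show "\<forall>u. u \<in> K \<longrightarrow> (cmod (g' u))\<^sup>2 * f (g u) = hyp_density u * \<bar>\<mu> (mob a1 t1 u) - \<nu> (mob b s (mob a1 t1 u))\<bar>"
    proof (intro allI impI)
      fix u assume "u \<in> K"
      then have u: "cmod u < 1" using hK by auto
      have "hyp_density (mob a1 t1 u) * (cmod (g' u))\<^sup>2 = hyp_density u"
        unfolding g'_def by (rule mob_dens[OF a1 u])
      then show "(cmod (g' u))\<^sup>2 * f (g u) = hyp_density u * \<bar>\<mu> (mob a1 t1 u) - \<nu> (mob b s (mob a1 t1 u))\<bar>"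
        unfolding f_def g_def by (metis mult.assoc mult.commute)
    qed
  qed
  also have "\<dots> = integral K (\<lambda>u. hyp_density u * \<bar>\<mu> (mob a1 t1 u) - \<nu> (mob b s (mob a1 t1 u))\<bar>)"
  proof (rule LH(1)[OF cK])
    have "continuous_on (g ` K) \<mu>" using c\<mu> img by (rule continuous_on_subset)
    moreover have "continuous_on (g ` K) (\<lambda>z. \<nu> (mob b s z))" using cm img by (rule continuous_on_subset)
    moreover have cg: "continuous_on K g" unfolding g_def using cont_mob[OF a1] hK by (rule continuous_on_subset)
    ultimately have "continuous_on K (\<lambda>u. \<mu> (g u))" "continuous_on K (\<lambda>u. \<nu> (mob b s (g u)))"
      by (auto intro: continuous_on_compose2[OF _ cg])
    moreover have "continuous_on K hyp_density" unfolding K_def by (rule cont_dens[OF r])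
    ultimately show "continuous_on K (\<lambda>u. hyp_density u * \<bar>\<mu> (mob a1 t1 u) - \<nu> (mob b s (mob a1 t1 u))\<bar>)"
      unfolding g_def by (intro continuous_intros) auto
  qed
  finally show ?thesis unfolding K_def r_def .
qed

lemma A1: assumes a1: "cmod a1 < 1" and a2: "cmod a2 < 1" and b: "cmod b < 1"
    and m: "mob b s (mob a1 t1 0) = mob a2 t2 0"
  shows "\<exists>th. \<forall>u. cmod u < 1 \<longrightarrow> mob b s (mob a1 t1 u) = mob a2 t2 (exp (\<i> * complex_of_real th) * u)"
proof -
  define wv where "wv = - (exp (\<i> * complex_of_real t2) * a2)"
  have wv1: "cmod wv < 1" unfolding wv_def using a2 by (simp add: norm_mult)
  obtain c1 s1 where c1: "cmod c1 < 1" and e1: "\<forall>z. cmod z < 1 \<longrightarrow> mob b s (mob a1 t1 z) = mob c1 s1 z"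
    using mob_comp[OF b a1, of s t1] by blast
  obtain c2 s2 where c2: "cmod c2 < 1" and e2: "\<forall>z. cmod z < 1 \<longrightarrow> mob wv (- t2) (mob c1 s1 z) = mob c2 s2 z"
    using mob_comp[OF wv1 c1, of "- t2" s1] by blast
  have "mob c2 s2 0 = mob wv (- t2) (mob c1 s1 0)" using e2 by simp
  also have "\<dots> = mob wv (- t2) (mob a2 t2 0)" using e1 m by simp
  also have "\<dots> = 0" unfolding mob_0 wv_def[symmetric] by (rule mob_self)
  finally have "c2 = 0" unfolding mob_0 by simp
  have "mob b s (mob a1 t1 u) = mob a2 t2 (exp (\<i> * complex_of_real s2) * u)" if u: "cmod u < 1" for u
  proof -
    have w: "cmod (mob b s (mob a1 t1 u)) < 1" using mob_ball[OF b mob_ball[OF a1 u]] .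
    have "mob b s (mob a1 t1 u) = mob a2 t2 (mob wv (- t2) (mob b s (mob a1 t1 u)))"
      unfolding wv_def by (rule mob_inv2[OF a2 w, symmetric])
    also have "mob wv (- t2) (mob b s (mob a1 t1 u)) = mob c2 s2 u" using e1 e2 u by simp
    also have "\<dots> = exp (\<i> * complex_of_real s2) * u" using \<open>c2 = 0\<close> by (simp add: mob_rot)
    finally show ?thesis .
  qed
  then show ?thesis by blast
qed

lemma A2: assumes a1: "cmod a1 < 1" and a2: "cmod a2 < 1"
  shows "\<exists>c s'. cmod c < 1 \<and> mob c s' (mob a1 t1 0) = mob a2 t2 0 \<and>
     (\<forall>u. cmod u < 1 \<longrightarrow> mob c s' (mob a1 t1 u) = mob a2 t2 (exp (\<i> * complex_of_real th) * u))"
proof -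
  define zv where "zv = - (exp (\<i> * complex_of_real t1) * a1)"
  have zv1: "cmod zv < 1" unfolding zv_def using a1 by (simp add: norm_mult)
  have z0: "cmod (0::complex) < 1" by simp
  obtain c3 s3 where c3: "cmod c3 < 1" and e3: "\<forall>z. cmod z < 1 \<longrightarrow> mob 0 th (mob zv (- t1) z) = mob c3 s3 z"
    using mob_comp[OF z0 zv1, of th "- t1"] by blast
  obtain c4 s4 where c4: "cmod c4 < 1" and e4: "\<forall>z. cmod z < 1 \<longrightarrow> mob a2 t2 (mob c3 s3 z) = mob c4 s4 z"
    using mob_comp[OF a2 c3, of t2 s3] by blast
  have key: "mob c4 s4 (mob a1 t1 u) = mob a2 t2 (exp (\<i> * complex_of_real th) * u)" if u: "cmod u < 1" for u
  proof -
    have w: "cmod (mob a1 t1 u) < 1" by (rule mob_ball[OF a1 u])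
    have "mob c4 s4 (mob a1 t1 u) = mob a2 t2 (mob 0 th (mob zv (- t1) (mob a1 t1 u)))" using e3 e4 w by simp
    also have "mob zv (- t1) (mob a1 t1 u) = u" unfolding zv_def by (rule mob_inv[OF a1 u])
    finally show ?thesis by (simp add: mob_rot)
  qed
  have "mob c4 s4 (mob a1 t1 0) = mob a2 t2 0" using key[of 0] by simp
  then show ?thesis using c4 key by blast
qed

lemma exp_shift: "exp (\<i> * complex_of_real (x + 2 * pi * real_of_int n)) = exp (\<i> * complex_of_real x)"
proof -
  have "exp (\<i> * complex_of_real (x + 2 * pi * real_of_int n))
      = exp (\<i> * complex_of_real x) * exp (complex_of_real (2 * real_of_int n * pi) * \<i>)"
    by (simp add: exp_add[symmetric] algebra_simps)
  also have "exp (complex_of_real (2 * real_of_int n * pi) * \<i>) = 1" by (rule exp_integer_2pi) simp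
  finally show ?thesis by simp
qed

lemma angle_pick: assumes L: "L \<ge> (1::nat)"
  shows "\<exists>l\<in>{1..L}. cmod (exp (\<i> * complex_of_real th) - exp (\<i> * complex_of_real (2 * pi * real l / real L))) \<le> 2 * pi / real L"
proof -
  have L0: "real L > 0" using L by simp
  define x where "x = th * real L / (2 * pi)"
  define k where "k = \<lceil>x\<rceil>"
  have k1: "x \<le> real_of_int k" "real_of_int k < x + 1" unfolding k_def by linarith+
  define l0 where "l0 = k mod int L"
  have l0: "0 \<le> l0" "l0 < int L" unfolding l0_def using L by auto
  define l where "l = (if l0 = 0 then L else nat l0)"
  have lL: "l \<in> {1..L}" unfolding l_def using l0 L by auto
  have dv: "int L dvd (k - int l)"
  proof (cases "l0 = 0")
    case True
    then have "int L dvd k" unfolding l0_def by auto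
    then show ?thesis using True unfolding l_def by simp
  next
    case False
    then have "int l = k mod int L" unfolding l_def l0_def using l0 by simp
    then show ?thesis by (simp add: minus_mod_eq_mult_div[symmetric])
  qed
  then obtain n where n: "k - int l = int L * n" by (elim dvdE)
  have xy: "2 * pi * real_of_int k / real L = 2 * pi * real l / real L + 2 * pi * real_of_int n"
  proof -
    have "real_of_int k = real l + real L * real_of_int n" using n by (metis of_int_add of_int_mult of_int_of_nat_eq diff_eq_eq add.commute)
    then show ?thesis using L0 by (simp add: field_simps)
  qed
  have "cmod (exp (\<i> * complex_of_real th) - exp (\<i> * complex_of_real (2 * pi * real l / real L)))
      = cmod (exp (\<i> * complex_of_real th) - exp (\<i> * complex_of_real (2 * pi * real_of_int k / real L)))"
    unfolding xy exp_shift ..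
  also have "\<dots> \<le> \<bar>th - 2 * pi * real_of_int k / real L\<bar>" by (rule exp_i_dist)
  also have "\<dots> = 2 * pi / real L * \<bar>x - real_of_int k\<bar>"
  proof -
    have "th - 2 * pi * real_of_int k / real L = 2 * pi / real L * (x - real_of_int k)"
      unfolding x_def using L0 by (simp add: field_simps)
    then show ?thesis by (simp add: abs_mult)
  qed
  also have "\<dots> \<le> 2 * pi / real L * 1" using k1 L0 by (intro mult_left_mono) auto
  finally show ?thesis using lL by auto
qed

lemma abs_aux1: "\<bar>\<bar>a - b\<bar> - \<bar>c - d\<bar>\<bar> \<le> \<bar>a - c\<bar> + \<bar>b - (d::real)\<bar>" by arith
lemma abs_aux2: "\<bar>\<bar>a - b\<bar> - \<bar>a - d\<bar>\<bar> \<le> \<bar>b - (d::real)\<bar>" by arith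

theorem mainTheorem4:
  fixes \<mu> \<nu> :: "complex \<Rightarrow> real" and R :: real
  assumes "\<exists>K. K-lipschitz_on (ball 0 1) \<mu>"
    and "\<exists>K. K-lipschitz_on (ball 0 1) \<nu>"
    and "R > 0"
  shows "\<exists>C1 C2. \<forall>(L::nat) zi wj mi mj P.
           L \<ge> 1 \<and> zi \<in> ball 0 1 \<and> wj \<in> ball 0 1 \<and>
           mi \<in> mobius_D \<and> mj \<in> mobius_D \<and> mi 0 = zi \<and> mj 0 = wj \<and>
           finite P \<and> P \<noteq> {} \<and> P \<subseteq> hyp_disk 0 R \<longrightarrow>
           \<bar>dR \<mu> \<nu> R zi wj - dhh \<mu> \<nu> R P L mi mj\<bar>
             \<le> C1 * fill_dist R P + C2 / real L"
proof -
  obtain K\<mu> where l\<mu>: "K\<mu>-lipschitz_on (ball 0 1) \<mu>" using assms(1) by blast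
  obtain K\<nu> where l\<nu>: "K\<nu>-lipschitz_on (ball 0 1) \<nu>" using assms(2) by blast
  have K\<mu>0: "K\<mu> \<ge> 0" by (rule lipschitz_on_nonneg[OF l\<mu>])
  have K\<nu>0: "K\<nu> \<ge> 0" by (rule lipschitz_on_nonneg[OF l\<nu>])
  have c\<mu>: "continuous_on (ball 0 1) \<mu>" by (rule lipschitz_on_continuous_on[OF l\<mu>])
  have c\<nu>: "continuous_on (ball 0 1) \<nu>" by (rule lipschitz_on_continuous_on[OF l\<nu>])
  define r where "r = tanh R"
  have r1: "r < 1" unfolding r_def by (rule tanh_real_lt_1)
  have r0: "0 < r" unfolding r_def using assms(3) by (simp add: tanh_real_pos_iff)
  define K where "K = cball (0::complex) r"
  have cK: "compact K" unfolding K_def by simp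
  have hK: "K \<subseteq> ball 0 1" unfolding K_def using r1 by auto
  have Kb: "cmod u < 1" if "u \<in> K" for u using hK that by auto
  have hd: "hyp_disk 0 R = cball 0 r" unfolding r_def by (rule hyp0)
  have cdK: "continuous_on K hyp_density" unfolding K_def by (rule cont_dens[OF r1])
  define A where "A = integral K hyp_density"
  have A0: "A \<ge> 0" unfolding A_def by (rule integral_nonneg[OF LH(2)[OF cK cdK]]) (rule dens_nonneg)
  define Lm where "Lm = 2 / (1 - r)"
  have Lm0: "Lm \<ge> 0" unfolding Lm_def using r1 by simp
  define \<Lambda> where "\<Lambda> = (K\<mu> + K\<nu>) * Lm"
  have \<Lambda>0: "\<Lambda> \<ge> 0" unfolding \<Lambda>_def using K\<mu>0 K\<nu>0 Lm0 by simp
  show ?thesis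
  proof (rule exI[of _ "\<Lambda> * A"], rule exI[of _ "K\<nu> * Lm * (2 * pi) * A"], intro allI impI)
    fix L :: nat and zi wj :: complex and mi mj :: "complex \<Rightarrow> complex" and P :: "complex set"
    assume H: "L \<ge> 1 \<and> zi \<in> ball 0 1 \<and> wj \<in> ball 0 1 \<and>
           mi \<in> mobius_D \<and> mj \<in> mobius_D \<and> mi 0 = zi \<and> mj 0 = wj \<and>
           finite P \<and> P \<noteq> {} \<and> P \<subseteq> hyp_disk 0 R"
    then have L1: "L \<ge> 1" and miD: "mi \<in> mobius_D" and mjD: "mj \<in> mobius_D" and mi0: "mi 0 = zi"
      and mj0: "mj 0 = wj" and fin: "finite P" and ne: "P \<noteq> {}" and sub: "P \<subseteq> K"
      unfolding K_def hd by auto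
    obtain a1 t1 where a1: "cmod a1 < 1" and mi: "mi = mob a1 t1" using miD unfolding mobius_D_mob by blast
    obtain a2 t2 where a2: "cmod a2 < 1" and mj: "mj = mob a2 t2" using mjD unfolding mobius_D_mob by blast
    define F where "F = (\<lambda>th u. \<bar>\<mu> (mob a1 t1 u) - \<nu> (mob a2 t2 (exp (\<i> * complex_of_real th) * u))\<bar>)"
    define J where "J = (\<lambda>th. integral K (\<lambda>u. hyp_density u * F th u))"
    define S where "S = (\<lambda>th. \<Sum>p\<in>P. quad_weight R P p * F th p)"
    define fd where "fd = fill_dist R P"
    have rotK: "exp (\<i> * complex_of_real th) * u \<in> K" if "u \<in> K" for th u
      using that unfolding K_def by (simp add: norm_mult)
    have cF: "continuous_on K (F th)" for th
    proof -
      have c1: "continuous_on K (\<lambda>u. \<mu> (mob a1 t1 u))"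
        by (rule continuous_on_compose2[OF c\<mu> continuous_on_subset[OF cont_mob[OF a1] hK]])
           (use hK mob_ball'[OF a1] in auto)
      have cr: "continuous_on K (\<lambda>u. exp (\<i> * complex_of_real th) * u)" by (intro continuous_intros)
      have c2: "continuous_on K (\<lambda>u. mob a2 t2 (exp (\<i> * complex_of_real th) * u))"
        by (rule continuous_on_compose2[OF cont_mob[OF a2] cr]) (use rotK hK in auto)
      have c3: "continuous_on K (\<lambda>u. \<nu> (mob a2 t2 (exp (\<i> * complex_of_real th) * u)))"
      proof (rule continuous_on_compose2[OF c\<nu> c2])
        show "(\<lambda>u. mob a2 t2 (exp (\<i> * complex_of_real th) * u)) ` K \<subseteq> ball 0 1"
          using mob_ball[OF a2 Kb[OF rotK]] by auto
      qed
      show ?thesis unfolding F_def by (intro continuous_intros c1 c3)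
    qed
    have cdF: "continuous_on K (\<lambda>u. hyp_density u * F th u)" for th by (intro continuous_intros cdK cF)
    have lipF: "\<bar>F th u - F th v\<bar> \<le> \<Lambda> * cmod (u - v)" if u: "u \<in> K" and v: "v \<in> K" for th u v
    proof -
      define e where "e = exp (\<i> * complex_of_real th)"
      have ur: "cmod u \<le> r" "cmod v \<le> r" using u v unfolding K_def by auto
      have "\<bar>F th u - F th v\<bar> \<le> \<bar>\<mu> (mob a1 t1 u) - \<mu> (mob a1 t1 v)\<bar> + \<bar>\<nu> (mob a2 t2 (e * u)) - \<nu> (mob a2 t2 (e * v))\<bar>"
        unfolding F_def e_def by (rule abs_aux1)
      also have "\<bar>\<mu> (mob a1 t1 u) - \<mu> (mob a1 t1 v)\<bar> \<le> K\<mu> * (Lm * cmod (u - v))"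
      proof -
        have "\<bar>\<mu> (mob a1 t1 u) - \<mu> (mob a1 t1 v)\<bar> \<le> K\<mu> * cmod (mob a1 t1 u - mob a1 t1 v)"
          by (rule lip_apply[OF l\<mu>]) (use mob_ball'[OF a1] u v hK in auto)
        also have "\<dots> \<le> K\<mu> * (Lm * cmod (u - v))" unfolding Lm_def
          by (rule mult_left_mono[OF mob_lip[OF a1 r1 ur] K\<mu>0])
        finally show ?thesis .
      qed
      also have "\<bar>\<nu> (mob a2 t2 (e * u)) - \<nu> (mob a2 t2 (e * v))\<bar> \<le> K\<nu> * (Lm * cmod (u - v))"
      proof -
        have eu: "e * u \<in> K" "e * v \<in> K" unfolding e_def using rotK u v by auto
        have eur: "cmod (e * u) \<le> r" "cmod (e * v) \<le> r" using eu unfolding K_def by auto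
        have "\<bar>\<nu> (mob a2 t2 (e * u)) - \<nu> (mob a2 t2 (e * v))\<bar> \<le> K\<nu> * cmod (mob a2 t2 (e * u) - mob a2 t2 (e * v))"
          by (rule lip_apply[OF l\<nu>]) (use mob_ball'[OF a2] eu hK in auto)
        also have "\<dots> \<le> K\<nu> * (Lm * cmod (e * u - e * v))" unfolding Lm_def
          by (rule mult_left_mono[OF mob_lip[OF a2 r1 eur] K\<nu>0])
        also have "cmod (e * u - e * v) = cmod (u - v)"
          unfolding e_def by (simp add: right_diff_distrib[symmetric] norm_mult)
        finally show ?thesis .
      qed
      finally show ?thesis unfolding \<Lambda>_def by (simp add: algebra_simps)
    qed
    have rotF: "\<bar>F th u - F th' u\<bar> \<le> K\<nu> * Lm * cmod (exp (\<i> * complex_of_real th) - exp (\<i> * complex_of_real th'))"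
      if u: "u \<in> K" for th th' u
    proof -
      define e where "e = exp (\<i> * complex_of_real th)"
      define e' where "e' = exp (\<i> * complex_of_real th')"
      have eu: "e * u \<in> K" "e' * u \<in> K" unfolding e_def e'_def using rotK u by auto
      have eur: "cmod (e * u) \<le> r" "cmod (e' * u) \<le> r" using eu unfolding K_def by auto
      have "\<bar>F th u - F th' u\<bar> \<le> \<bar>\<nu> (mob a2 t2 (e * u)) - \<nu> (mob a2 t2 (e' * u))\<bar>"
        unfolding F_def e_def e'_def by (rule abs_aux2)
      also have "\<dots> \<le> K\<nu> * cmod (mob a2 t2 (e * u) - mob a2 t2 (e' * u))"
        by (rule lip_apply[OF l\<nu>]) (use mob_ball'[OF a2] eu hK in auto)
      also have "\<dots> \<le> K\<nu> * (Lm * cmod (e * u - e' * u))" unfolding Lm_def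
        by (rule mult_left_mono[OF mob_lip[OF a2 r1 eur] K\<nu>0])
      also have "cmod (e * u - e' * u) \<le> cmod (e - e')"
      proof -
        have "cmod (e * u - e' * u) = cmod (e - e') * cmod u" by (simp add: left_diff_distrib[symmetric] norm_mult)
        also have "\<dots> \<le> cmod (e - e') * 1" using Kb[OF u] by (intro mult_left_mono) auto
        finally show ?thesis by simp
      qed
      then have "K\<nu> * (Lm * cmod (e * u - e' * u)) \<le> K\<nu> * (Lm * cmod (e - e'))"
        using K\<nu>0 Lm0 by (intro mult_left_mono) auto
      finally show ?thesis unfolding e_def e'_def by (simp add: algebra_simps)
    qed
    have JS: "\<bar>J th - S th\<bar> \<le> \<Lambda> * fd * A" for th
      unfolding J_def S_def fd_def A_def K_def
      by (rule quad[OF fin ne sub[unfolded K_def] r1 hd]) (use cF lipF \<Lambda>0 in \<open>auto simp: K_def\<close>)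
    have JJ: "\<bar>J th - J th'\<bar> \<le> K\<nu> * Lm * cmod (exp (\<i> * complex_of_real th) - exp (\<i> * complex_of_real th')) * A" for th th'
    proof -
      define c where "c = K\<nu> * Lm * cmod (exp (\<i> * complex_of_real th) - exp (\<i> * complex_of_real th'))"
      have c0: "c \<ge> 0" unfolding c_def using K\<nu>0 Lm0 by simp
      have "\<bar>J th - J th'\<bar> \<le> integral K (\<lambda>u. hyp_density u * c)"
        unfolding J_def
      proof (rule int_bound[OF cK cdF cdF])
        show "continuous_on K (\<lambda>u. hyp_density u * c)" by (intro continuous_intros cdK)
        fix u assume u: "u \<in> K"
        have "\<bar>hyp_density u * F th u - hyp_density u * F th' u\<bar> = hyp_density u * \<bar>F th u - F th' u\<bar>"
          using dens_nonneg[of u] by (simp add: abs_mult right_diff_distrib[symmetric])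
        also have "\<dots> \<le> hyp_density u * c" unfolding c_def by (rule mult_left_mono[OF rotF[OF u] dens_nonneg])
        finally show "\<bar>hyp_density u * F th u - hyp_density u * F th' u\<bar> \<le> hyp_density u * c" .
      qed
      also have "\<dots> = c * A" unfolding A_def by (simp add: integral_mult_left mult.commute)
      finally show ?thesis unfolding c_def .
    qed
    have J0: "J th \<ge> 0" for th unfolding J_def
      by (rule integral_nonneg[OF LH(2)[OF cK cdF]]) (simp add: F_def dens_nonneg)
    show "\<bar>dR \<mu> \<nu> R zi wj - dhh \<mu> \<nu> R P L mi mj\<bar> \<le> \<Lambda> * A * fill_dist R P + K\<nu> * Lm * (2 * pi) * A / real L"
    proof -
      have zi: "zi = mob a1 t1 0" using mi0 mi by simp
      have wj: "wj = mob a2 t2 0" using mj0 mj by simp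
      define X where "X = (\<lambda>m. LINT z:(hyp_disk zi R)|lborel. hyp_density z * \<bar>\<mu> z - \<nu> (m z)\<bar>)"
      define Ms where "Ms = {m \<in> mobius_D. m zi = wj}"
      have XJ: "X (mob b s) = J th"
        if b: "cmod b < 1" and th: "\<forall>u. cmod u < 1 \<longrightarrow> mob b s (mob a1 t1 u) = mob a2 t2 (exp (\<i> * complex_of_real th) * u)"
        for b s th
      proof -
        have "X (mob b s) = integral K (\<lambda>u. hyp_density u * \<bar>\<mu> (mob a1 t1 u) - \<nu> (mob b s (mob a1 t1 u))\<bar>)"
          unfolding X_def zi K_def r_def by (rule X_eq[OF a1 b c\<mu> c\<nu>])
        also have "\<dots> = J th" unfolding J_def F_def
          by (rule integral_cong) (use th Kb in simp)
        finally show ?thesis .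
      qed
      have XMs: "X ` Ms = range J"
      proof
        show "X ` Ms \<subseteq> range J"
        proof
          fix y assume "y \<in> X ` Ms"
          then obtain m where m: "m \<in> mobius_D" "m zi = wj" "y = X m" unfolding Ms_def by auto
          then obtain b s where b: "cmod b < 1" and mb: "m = mob b s" unfolding mobius_D_mob by blast
          have "mob b s (mob a1 t1 0) = mob a2 t2 0" using m(2) mb zi wj by simp
          then obtain th where "\<forall>u. cmod u < 1 \<longrightarrow> mob b s (mob a1 t1 u) = mob a2 t2 (exp (\<i> * complex_of_real th) * u)"
            using A1[OF a1 a2 b] by blast
          then have "y = J th" using XJ[OF b] m(3) mb by simp
          then show "y \<in> range J" by simp
        qed
        show "range J \<subseteq> X ` Ms"
        proof
          fix y assume "y \<in> range J"
          then obtain th where y: "y = J th" by auto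
          obtain c s' where c: "cmod c < 1" and c0: "mob c s' (mob a1 t1 0) = mob a2 t2 0"
            and cth: "\<forall>u. cmod u < 1 \<longrightarrow> mob c s' (mob a1 t1 u) = mob a2 t2 (exp (\<i> * complex_of_real th) * u)"
            using A2[OF a1 a2, of t1 t2 th] by blast
          have "mob c s' \<in> Ms" unfolding Ms_def mobius_D_mob using c c0 zi wj by auto
          moreover have "y = X (mob c s')" using XJ[OF c cth] y by simp
          ultimately show "y \<in> X ` Ms" by blast
        qed
      qed
      have dR_eq: "dR \<mu> \<nu> R zi wj = Inf (range J)"
        unfolding dR_def X_def[symmetric] Ms_def[symmetric] XMs ..
      have inj1: "inj_on mi (ball 0 1)" unfolding mi by (rule inj_mob[OF a1])
      define tl where "tl = (\<lambda>l::nat. 2 * pi * real l / real L)"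
      have rotl: "rot L l p = exp (\<i> * complex_of_real (tl l)) * p" for l p
      proof -
        have "2 * complex_of_real pi * \<i> * of_nat l / of_nat L = \<i> * complex_of_real (tl l)"
          unfolding tl_def by (simp add: field_simps)
        then show ?thesis unfolding rot_def by simp
      qed
      have dhh_eq: "dhh \<mu> \<nu> R P L mi mj = Min ((\<lambda>l. S (tl l)) ` {1..L})"
        unfolding dhh_def
      proof (rule arg_cong[where f = Min], rule image_cong[OF refl])
        fix l assume "l \<in> {1..L}"
        show "(\<Sum>p\<in>P. quad_weight R P p * \<bar>\<mu> (mi p) - \<nu> ((mj \<circ> rot L l \<circ> inv_into (ball 0 1) mi) (mi p))\<bar>) = S (tl l)"
          unfolding S_def F_def
        proof (rule sum.cong[OF refl])
          fix p assume p: "p \<in> P"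
          have pb: "p \<in> ball 0 1" using p sub hK by auto
          have "inv_into (ball 0 1) mi (mi p) = p" by (rule inv_into_f_f[OF inj1 pb])
          then show "quad_weight R P p * \<bar>\<mu> (mi p) - \<nu> ((mj \<circ> rot L l \<circ> inv_into (ball 0 1) mi) (mi p))\<bar>
              = quad_weight R P p * \<bar>\<mu> (mob a1 t1 p) - \<nu> (mob a2 t2 (exp (\<i> * complex_of_real (tl l)) * p))\<bar>"
            unfolding mi mj by (simp add: rotl)
        qed
      qed
      have finI: "finite ((\<lambda>l. S (tl l)) ` {1..L})" by simp
      have neI: "(\<lambda>l. S (tl l)) ` {1..L} \<noteq> {}" using L1 by auto
      obtain l0 where l0: "l0 \<in> {1..L}" and dl0: "dhh \<mu> \<nu> R P L mi mj = S (tl l0)"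
        using Min_in[OF finI neI] unfolding dhh_eq by auto
      have bdd: "bdd_below (range J)" using J0 by (intro bdd_belowI[of _ 0]) auto
      have i1: "dR \<mu> \<nu> R zi wj - dhh \<mu> \<nu> R P L mi mj \<le> \<Lambda> * A * fill_dist R P"
      proof -
        have "dR \<mu> \<nu> R zi wj \<le> J (tl l0)" unfolding dR_eq by (rule cInf_lower[OF rangeI bdd])
        also have "\<dots> \<le> S (tl l0) + \<Lambda> * fd * A" using JS[of "tl l0"] by simp
        finally show ?thesis unfolding dl0 fd_def by (simp add: algebra_simps)
      qed
      have i2: "dhh \<mu> \<nu> R P L mi mj - dR \<mu> \<nu> R zi wj \<le> \<Lambda> * A * fill_dist R P + K\<nu> * Lm * (2 * pi) * A / real L"
      proof -
        have "dhh \<mu> \<nu> R P L mi mj - \<Lambda> * A * fill_dist R P - K\<nu> * Lm * (2 * pi) * A / real L \<le> J th" for th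
        proof -
          obtain l where l: "l \<in> {1..L}" and cl: "cmod (exp (\<i> * complex_of_real th) - exp (\<i> * complex_of_real (tl l))) \<le> 2 * pi / real L"
            using angle_pick[OF L1, of th] unfolding tl_def by blast
          have "dhh \<mu> \<nu> R P L mi mj \<le> S (tl l)" unfolding dhh_eq by (rule Min_le[OF finI]) (use l in auto)
          also have "\<dots> \<le> J (tl l) + \<Lambda> * fd * A" using JS[of "tl l"] by simp
          also have "J (tl l) \<le> J th + K\<nu> * Lm * cmod (exp (\<i> * complex_of_real (tl l)) - exp (\<i> * complex_of_real th)) * A"
            using JJ[of "tl l" th] by simp
          also have "K\<nu> * Lm * cmod (exp (\<i> * complex_of_real (tl l)) - exp (\<i> * complex_of_real th)) * A
              \<le> K\<nu> * Lm * (2 * pi / real L) * A"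
            using cl K\<nu>0 Lm0 A0 by (intro mult_right_mono mult_left_mono) (auto simp: norm_minus_commute)
          finally show ?thesis unfolding fd_def by (simp add: algebra_simps)
        qed
        then have "dhh \<mu> \<nu> R P L mi mj - \<Lambda> * A * fill_dist R P - K\<nu> * Lm * (2 * pi) * A / real L \<le> Inf (range J)"
          by (intro cInf_greatest) auto
        then show ?thesis unfolding dR_eq by simp
      qed
      have c2: "K\<nu> * Lm * (2 * pi) * A / real L \<ge> 0"
        using K\<nu>0 Lm0 A0 by (intro divide_nonneg_nonneg mult_nonneg_nonneg) auto
      show ?thesis using i1 i2 c2 unfolding abs_le_iff by linarith
    qed
  qed
qed


end
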